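(* Let $\rho_x=\frac12(I+\vec v_x\cdot\vec\sigma)$, $x=1,2,3$, be qubit states with equal purity $\|\vec v_1\|=\|\vec v_2\|=\|\vec v_3\|=f$, given with equal prior probabilities $1/3$, and suppose the convex hull of $\vec v_1,\vec v_2,\vec v_3$ contains the origin. Then $$P_{\mathrm{guess}}=\frac13+\frac13 f,$$ independently of any other details of the states (e.g. the angles between them).
   Context: $\vec\sigma=(X,Y,Z)$ are the Pauli matrices; the purity of a qubit state is the Euclidean norm of its Bloch vector. $P_{\mathrm{guess}}=\max\sum_{x=1}^3\frac13\mathrm{tr}[M_x\rho_x]$ over POVMs $\{M_x\}_{x=1}^3$ (positive semidefinite operators summing to $I$). *)

theory Defs
  imports "HOL-Analysis.Analysis"
begin

type_synonym qmat = "complex^2^2"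

definition pauliX :: qmat where
  "pauliX = (\<chi> i j. if i \<noteq> j then 1 else 0)"
definition pauliY :: qmat where
  "pauliY = (\<chi> i j. if i = 0 \<and> j = 1 then - \<i> else if i = 1 \<and> j = 0 then \<i> else 0)"
definition pauliZ :: qmat where
  "pauliZ = (\<chi> i j. if i = j then (if i = 0 then 1 else -1) else 0)"

definition psd :: "qmat \<Rightarrow> bool" where
  "psd A \<longleftrightarrow> (\<forall>x::complex^2. let q = (\<Sum>i\<in>UNIV. \<Sum>j\<in>UNIV. cnj (x $ i) * A $ i $ j * x $ j)
                                  in Im q = 0 \<and> 0 \<le> Re q)"

definition bloch_state :: "real^3 \<Rightarrow> qmat" where
  "bloch_state v = (1/2) *\<^sub>R (mat 1 + v $ 1 *\<^sub>R pauliX + v $ 2 *\<^sub>R pauliY + v $ 3 *\<^sub>R pauliZ)"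

definition povm3 :: "(nat \<Rightarrow> qmat) \<Rightarrow> bool" where
  "povm3 M \<longleftrightarrow> (\<forall>x\<in>{1,2,3}. psd (M x)) \<and> M 1 + M 2 + M 3 = mat 1"

definition success_prob :: "(nat \<Rightarrow> qmat) \<Rightarrow> (nat \<Rightarrow> qmat) \<Rightarrow> real" where
  "success_prob M \<rho> = (\<Sum>x\<in>{1,2,3::nat}. (1/3) * Re (trace (M x ** \<rho> x)))"

text \<open>Optimal guessing probability (the maximum is attained, so Sup = max).\<close>
definition P_guess :: "(nat \<Rightarrow> qmat) \<Rightarrow> real" where
  "P_guess \<rho> = Sup {success_prob M \<rho> | M. povm3 M}"

end

theory Submission imports Defs begin

lemma univ2: "(UNIV :: 2 set) = {0, 1}"
  using exhaust_2 by force

lemma two_eq_zero2: "(2::2) = 0" by simp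

lemma sum2: "(\<Sum>i\<in>(UNIV::2 set). g i) = g 0 + g 1"
  using sum_2[of g] two_eq_zero2 by (simp add: add.commute)

lemma all2: "(\<forall>i::2. P i) \<longleftrightarrow> P 0 \<and> P 1"
  by (metis univ2 UNIV_I insert_iff singletonD)

lemma bloch_entries:
  "bloch_state v $ 0 $ 0 = complex_of_real ((1 + v$3)/2)"
  "bloch_state v $ 1 $ 1 = complex_of_real ((1 - v$3)/2)"
  "bloch_state v $ 0 $ 1 = Complex (v$1/2) (- v$2/2)"
  "bloch_state v $ 1 $ 0 = Complex (v$1/2) (v$2/2)"
  by (simp_all add: bloch_state_def pauliX_def pauliY_def pauliZ_def mat_def complex_eq_iff)

lemma tr_formula:
  "trace ((A::qmat) ** B) = A$0$0 * B$0$0 + A$0$1 * B$1$0 + A$1$0 * B$0$1 + A$1$1 * B$1$1"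
  unfolding trace_def matrix_matrix_mult_def sum2 by simp

lemma qf_expand:
  "(\<Sum>i\<in>UNIV. \<Sum>j\<in>UNIV. cnj ((x::complex^2) $ i) * (A::qmat) $ i $ j * x $ j) =
    cnj (x$0) * A$0$0 * x$0 + cnj (x$0) * A$0$1 * x$1 + cnj (x$1) * A$1$0 * x$0 + cnj (x$1)*A$1$1*x$1"
  unfolding sum2 by (simp add: algebra_simps)

definition vec2 :: "complex \<Rightarrow> complex \<Rightarrow> complex^2" where
  "vec2 a b = (\<chi> i. if i = 0 then a else b)"

lemma vec2_simps[simp]: "vec2 a b $ 0 = a" "vec2 a b $ 1 = b"
  by (simp_all add: vec2_def)

lemma psd_vec:
  fixes A :: qmat
  assumes "psd A"
  shows "Im (cnj a * A$0$0 * a + cnj a * A$0$1 * b + cnj b * A$1$0 * a + cnj b*A$1$1*b) = 0"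
    "0 \<le> Re (cnj a * A$0$0 * a + cnj a * A$0$1 * b + cnj b * A$1$0 * a + cnj b*A$1$1*b)"
  using assms unfolding psd_def Let_def qf_expand
  by (metis vec2_simps)+

lemma norm3: "(norm (v::real^3))^2 = (v$1)^2 + (v$2)^2 + (v$3)^2"
  unfolding power2_norm_eq_inner inner_vec_def sum_3 by (simp add: power2_eq_square)

lemma psd_D:
  fixes A :: qmat
  assumes "psd A"
  shows "Im (A$0$0) = 0" "Im (A$1$1) = 0" "Re (A$0$0) \<ge> 0" "Re (A$1$1) \<ge> 0"
    "A$1$0 = cnj (A$0$1)" "(cmod (A$0$1))^2 \<le> Re (A$0$0) * Re (A$1$1)"
proof -
  note P = psd_vec[OF assms]
  show 1: "Im (A$0$0) = 0" "Re (A$0$0) \<ge> 0" using P[of 1 0] by simp_all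
  show 2: "Im (A$1$1) = 0" "Re (A$1$1) \<ge> 0" using P[of 0 1] by simp_all
  have a: "Im (A$0$1) + Im (A$1$0) = 0" using P(1)[of 1 1] 1 2 by simp
  have b: "Re (A$0$1) = Re (A$1$0)" using P(1)[of 1 \<i>] 1 2 by simp
  show 3: "A$1$0 = cnj (A$0$1)" using a b by (simp add: complex_eq_iff)
  define p where "p = Re (A$0$0)"
  define s where "s = Re (A$1$1)"
  define x where "x = Re (A$0$1)"
  define y where "y = Im (A$0$1)"
  have A00: "A$0$0 = complex_of_real p" using 1 by (simp add: p_def complex_eq_iff)
  have A11: "A$1$1 = complex_of_real s" using 2 by (simp add: s_def complex_eq_iff)
  have A01: "A$0$1 = Complex x y" by (simp add: x_def y_def complex_eq_iff)
  have A10: "A$1$0 = Complex x (-y)" using 3 A01 by (simp add: complex_eq_iff)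
  have cm: "(cmod (A$0$1))^2 = x^2 + y^2" using A01 by (simp add: cmod_power2)
  have e1: "0 \<le> s * (p * s - (x^2+y^2))"
    using P(2)[of "complex_of_real s" "- cnj (A$0$1)"] A00 A11 A01 A10
    by (simp add: algebra_simps power2_eq_square)
  have e2: "0 \<le> p * (p * s - (x^2+y^2))"
    using P(2)[of "- A$0$1" "complex_of_real p"] A00 A11 A01 A10
    by (simp add: algebra_simps power2_eq_square)
  have e3: "0 \<le> p + s * (x^2+y^2) - 2 * (x^2+y^2)"
    using P(2)[of 1 "- cnj (A$0$1)"] A00 A11 A01 A10
    by (simp add: algebra_simps power2_eq_square)
  have ps: "p \<ge> 0" "s \<ge> 0" using 1 2 by (simp_all add: p_def s_def)
  have "x^2 + y^2 \<le> p * s"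
  proof (cases "s > 0")
    case True then show ?thesis using e1 by (simp add: zero_le_mult_iff)
  next
    case False
    then have s0: "s = 0" using ps by simp
    show ?thesis
    proof (cases "p > 0")
      case True then show ?thesis using e2 by (simp add: zero_le_mult_iff)
    next
      case False
      then have "p = 0" using ps by simp
      then show ?thesis using e3 s0 by (simp add: add_nonneg_nonneg)
    qed
  qed
  then show "(cmod (A$0$1))^2 \<le> Re (A$0$0) * Re (A$1$1)" using cm by (simp add: p_def s_def)
qed

lemma psd_I:
  fixes A :: qmat
  assumes h1: "Im (A$0$0) = 0" and h2: "Im (A$1$1) = 0" and h3: "Re (A$0$0) \<ge> 0"
    and h4: "Re (A$1$1) \<ge> 0" and h5: "A$1$0 = cnj (A$0$1)"
    and h6: "(cmod (A$0$1))^2 \<le> Re (A$0$0) * Re (A$1$1)"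
  shows "psd A"
  unfolding psd_def Let_def qf_expand
proof
  fix x :: "complex^2"
  define a where "a = x$0"
  define b where "b = x$1"
  define p where "p = Re (A$0$0)"
  define s where "s = Re (A$1$1)"
  define q where "q = A$0$1"
  define z where "z = cnj a * q * b"
  have A00: "A$0$0 = complex_of_real p" using h1 by (simp add: p_def complex_eq_iff)
  have A11: "A$1$1 = complex_of_real s" using h2 by (simp add: s_def complex_eq_iff)
  have na: "cnj a * a = complex_of_real ((cmod a)^2)" by (metis complex_norm_square mult.commute)
  have nb: "cnj b * b = complex_of_real ((cmod b)^2)" by (metis complex_norm_square mult.commute)
  have cz: "cnj z = cnj b * cnj q * a" by (simp add: z_def)
  have zz: "z + cnj z = complex_of_real (2 * Re z)" by (simp add: complex_add_cnj)
  have E: "cnj (x$0) * A$0$0 * x$0 + cnj (x$0) * A$0$1 * x$1 + cnj (x$1) * A$1$0 * x$0 + cnj (x$1)*A$1$1*x$1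
      = complex_of_real (p * (cmod a)^2 + s * (cmod b)^2 + 2 * Re z)"
  proof -
    have "cnj (x$0) * A$0$0 * x$0 + cnj (x$0) * A$0$1 * x$1 + cnj (x$1) * A$1$0 * x$0 + cnj (x$1)*A$1$1*x$1
       = complex_of_real p * (cnj a * a) + complex_of_real s * (cnj b * b) + (z + cnj z)"
      unfolding A00 A11 h5 cz a_def[symmetric] b_def[symmetric] q_def[symmetric] z_def
      by (simp add: algebra_simps)
    also have "\<dots> = complex_of_real (p * (cmod a)^2 + s * (cmod b)^2 + 2 * Re z)"
      unfolding na nb zz by simp
    finally show ?thesis .
  qed
  have p0: "p \<ge> 0" and s0: "s \<ge> 0" using h3 h4 by (simp_all add: p_def s_def)
  have cq: "cmod q \<le> sqrt p * sqrt s"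
    using h6 by (simp add: q_def p_def s_def real_le_rsqrt real_sqrt_mult[symmetric])
  have "- Re z \<le> cmod z" using abs_Re_le_cmod[of z] by linarith
  also have "cmod z = cmod a * cmod q * cmod b" by (simp add: z_def norm_mult)
  also have "\<dots> \<le> cmod a * (sqrt p * sqrt s) * cmod b"
    by (intro mult_right_mono mult_left_mono cq) auto
  finally have rz: "- Re z \<le> cmod a * (sqrt p * sqrt s) * cmod b" .
  have sq: "p * (cmod a)^2 + s * (cmod b)^2 - 2 * (cmod a * (sqrt p * sqrt s) * cmod b)
      = (sqrt p * cmod a - sqrt s * cmod b)^2"
  proof -
    have sp: "sqrt p * (sqrt p * t) = p * t" for t using p0 by (simp add: mult.assoc[symmetric])
    have ss: "sqrt s * (sqrt s * t) = s * t" for t using s0 by (simp add: mult.assoc[symmetric])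
    show ?thesis by (simp add: power2_eq_square algebra_simps sp ss)
  qed
  have "0 \<le> p * (cmod a)^2 + s * (cmod b)^2 + 2 * Re z"
    using rz sq by (smt (verit) zero_le_power2)
  then show "Im (cnj (x$0) * A$0$0 * x$0 + cnj (x$0) * A$0$1 * x$1 + cnj (x$1) * A$1$0 * x$0 + cnj (x$1)*A$1$1*x$1) = 0 \<and>
     0 \<le> Re (cnj (x$0) * A$0$0 * x$0 + cnj (x$0) * A$0$1 * x$1 + cnj (x$1) * A$1$0 * x$0 + cnj (x$1)*A$1$1*x$1)"
    unfolding E by simp
qed

lemma lagrange3:
  fixes a1 a2 a3 b1 b2 b3 :: real
  shows "(a1*b1+a2*b2+a3*b3)^2 \<le> (a1^2+a2^2+a3^2)*(b1^2+b2^2+b3^2)"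
proof -
  have "(a1^2+a2^2+a3^2)*(b1^2+b2^2+b3^2) - (a1*b1+a2*b2+a3*b3)^2
     = (a1*b2-a2*b1)^2+(a1*b3-a3*b1)^2+(a2*b3-a3*b2)^2"
    by (simp add: power2_eq_square algebra_simps)
  moreover have "0 \<le> (a1*b2-a2*b1)^2+(a1*b3-a3*b1)^2+(a2*b3-a3*b2)^2" by simp
  ultimately show ?thesis by linarith
qed

lemma ub:
  fixes A :: qmat
  assumes "psd A" and nv: "norm v \<le> f"
  shows "Re (trace (A ** bloch_state v)) \<le> (1+f) * (Re (A$0$0) + Re (A$1$1)) / 2"
proof -
  note D = psd_D[OF assms(1)]
  define p where "p = Re (A$0$0)"
  define s where "s = Re (A$1$1)"
  define x where "x = Re (A$0$1)"
  define y where "y = Im (A$0$1)"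
  have A00: "A$0$0 = complex_of_real p" using D by (simp add: p_def complex_eq_iff)
  have A11: "A$1$1 = complex_of_real s" using D by (simp add: s_def complex_eq_iff)
  have A01: "A$0$1 = Complex x y" by (simp add: x_def y_def complex_eq_iff)
  have A10: "A$1$0 = Complex x (-y)" using D(5) A01 by (simp add: complex_eq_iff)
  have ps: "x^2 + y^2 \<le> p * s" using D(6) A01 by (simp add: cmod_power2 p_def s_def)
  have p0: "p \<ge> 0" and s0: "s \<ge> 0" using D by (simp_all add: p_def s_def)
  have f0: "f \<ge> 0" using nv norm_ge_zero order_trans by blast
  have tr: "Re (trace (A ** bloch_state v)) = (p+s)/2 + (v$1 * x + v$2 * (-y) + v$3 * ((p-s)/2))"
    unfolding tr_formula bloch_entries A00 A11 A01 A10 by (simp add: field_simps)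
  define d where "d = v$1 * x + v$2 * (-y) + v$3 * ((p-s)/2)"
  have "d^2 \<le> ((v$1)^2+(v$2)^2+(v$3)^2) * (x^2 + (-y)^2 + ((p-s)/2)^2)"
    unfolding d_def by (rule lagrange3)
  also have "\<dots> \<le> f^2 * ((p+s)/2)^2"
  proof (rule mult_mono)
    show "(v$1)^2+(v$2)^2+(v$3)^2 \<le> f^2" unfolding norm3[symmetric]
      using nv by (simp add: power_mono)
    have "((p - s) / 2)^2 = ((p + s) / 2)^2 - p * s" by (simp add: power2_eq_square field_simps)
    then show "x^2 + (-y)^2 + ((p-s)/2)^2 \<le> ((p+s)/2)^2" using ps by simp
  qed auto
  also have "\<dots> = (f * ((p+s)/2))^2" by (metis power_mult_distrib)
  finally have "d \<le> f * ((p+s)/2)"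
    using p0 s0 f0 by (meson abs_le_square_iff abs_le_D1 order_trans abs_of_nonneg mult_nonneg_nonneg divide_nonneg_nonneg add_nonneg_nonneg zero_le_numeral power2_le_imp_le)
  then show ?thesis unfolding tr d_def[symmetric] p_def[symmetric] s_def[symmetric]
    by (simp add: field_simps)
qed

lemma scaled_entries:
  "(c *\<^sub>R bloch_state w) $ 0 $ 0 = complex_of_real (c * (1 + w$3)/2)"
  "(c *\<^sub>R bloch_state w) $ 1 $ 1 = complex_of_real (c * (1 - w$3)/2)"
  "(c *\<^sub>R bloch_state w) $ 0 $ 1 = Complex (c * w$1/2) (- (c * w$2/2))"
  "(c *\<^sub>R bloch_state w) $ 1 $ 0 = Complex (c * w$1/2) (c * w$2/2)"
  by (simp_all add: bloch_entries complex_eq_iff)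

lemma psd_scaled:
  assumes c0: "c \<ge> 0" and nw: "norm w \<le> 1"
  shows "psd (c *\<^sub>R bloch_state w)"
proof (rule psd_I)
  have n2: "(w$1)^2 + (w$2)^2 + (w$3)^2 \<le> 1" unfolding norm3[symmetric]
    using nw by (simp add: power_le_one)
  then have "(w$3)^2 \<le> 1" by (smt (verit) zero_le_power2)
  then have w3: "\<bar>w$3\<bar> \<le> 1" by (simp add: abs_square_le_1)
  show "0 \<le> Re ((c *\<^sub>R bloch_state w) $ 0 $ 0)" unfolding scaled_entries using c0 w3 by simp
  show "0 \<le> Re ((c *\<^sub>R bloch_state w) $ 1 $ 1)" unfolding scaled_entries using c0 w3 by simp
  show "Im ((c *\<^sub>R bloch_state w) $ 0 $ 0) = 0" unfolding scaled_entries by simp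
  show "Im ((c *\<^sub>R bloch_state w) $ 1 $ 1) = 0" unfolding scaled_entries by simp
  show "(c *\<^sub>R bloch_state w) $ 1 $ 0 = cnj ((c *\<^sub>R bloch_state w) $ 0 $ 1)"
    unfolding scaled_entries by (simp add: complex_eq_iff)
  have "(c * w$1/2)^2 + (c * w$2/2)^2 = (c^2/4) * ((w$1)^2 + (w$2)^2)"
    by (simp add: power2_eq_square field_simps)
  also have "\<dots> \<le> (c^2/4) * (1 - (w$3)^2)" using n2 by (intro mult_left_mono) auto
  also have "\<dots> = (c * (1 + w$3)/2) * (c * (1 - w$3)/2)" by (simp add: power2_eq_square field_simps)
  finally show "(cmod ((c *\<^sub>R bloch_state w) $ 0 $ 1))^2 \<le>
      Re ((c *\<^sub>R bloch_state w) $ 0 $ 0) * Re ((c *\<^sub>R bloch_state w) $ 1 $ 1)"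
    unfolding scaled_entries by (simp add: cmod_power2)
qed

lemma tr_scaled:
  "Re (trace ((c *\<^sub>R bloch_state w) ** bloch_state v)) = c/2 * (1 + (w$1 * v$1 + w$2 * v$2 + w$3 * v$3))"
  unfolding tr_formula scaled_entries bloch_entries by (simp add: field_simps)

theorem mainTheorem6:
  fixes v :: "nat \<Rightarrow> real^3" and f :: real
  assumes states: "\<forall>x\<in>{1,2,3::nat}. psd (bloch_state (v x))"
    and purity: "\<forall>x\<in>{1,2,3::nat}. norm (v x) = f"
    and hull: "0 \<in> convex hull {v 1, v 2, v 3}"
  shows "P_guess (\<lambda>x. bloch_state (v x)) = 1/3 + 1/3 * f"
proof -
  have f0: "f \<ge> 0" using purity by (metis insertI1 norm_ge_zero)
  obtain a b c where abc: "0 \<le> a" "0 \<le> b" "0 \<le> c" "a + b + c = 1"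
    and hv: "0 = a *\<^sub>R v 1 + b *\<^sub>R v 2 + c *\<^sub>R v 3"
    using hull unfolding convex_hull_3 by blast
  define w where "w x = (1/f) *\<^sub>R v x" for x
  define lam where "lam x = (if x = (1::nat) then a else if x = 2 then b else c)" for x
  define M where "M x = (2 * lam x) *\<^sub>R bloch_state (w x)" for x
  have wsum: "a *\<^sub>R w 1 + b *\<^sub>R w 2 + c *\<^sub>R w 3 = 0"
  proof -
    have "a *\<^sub>R w 1 + b *\<^sub>R w 2 + c *\<^sub>R w 3 = (1/f) *\<^sub>R (a *\<^sub>R v 1 + b *\<^sub>R v 2 + c *\<^sub>R v 3)"
      by (simp add: w_def scaleR_add_right)
    then show ?thesis using hv by simp
  qed
  have wk: "a * w 1 $ k + b * w 2 $ k + c * w 3 $ k = 0" for k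
  proof -
    have "(a *\<^sub>R w 1 + b *\<^sub>R w 2 + c *\<^sub>R w 3) $ k = 0" using wsum by simp
    then show ?thesis by simp
  qed
  have nw: "norm (w x) \<le> 1" if "x \<in> {1,2,3}" for x
  proof (cases "f = 0")
    case True then show ?thesis by (simp add: w_def)
  next
    case False
    have "norm (v x) = f" using purity that by blast
    then have "norm (w x) = 1" using False f0 by (simp add: w_def)
    then show ?thesis by simp
  qed
  have wv: "w x $ 1 * v x $ 1 + w x $ 2 * v x $ 2 + w x $ 3 * v x $ 3 = f" if "x \<in> {1,2,3}" for x
  proof -
    have "w x $ 1 * v x $ 1 + w x $ 2 * v x $ 2 + w x $ 3 * v x $ 3
        = (1/f) * ((v x $ 1)^2 + (v x $ 2)^2 + (v x $ 3)^2)"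
      by (simp add: w_def power2_eq_square algebra_simps)
    also have "\<dots> = (1/f) * f^2" unfolding norm3[symmetric]
      using purity that by (metis insertE singletonD)
    also have "\<dots> = f" by (cases "f = 0") (simp_all add: power2_eq_square)
    finally show ?thesis .
  qed
  have lam0: "lam x \<ge> 0" for x using abc by (simp add: lam_def)
  have povm: "povm3 M"
    unfolding povm3_def
  proof
    show "\<forall>x\<in>{1, 2, 3}. psd (M x)"
      using nw lam0 by (simp add: M_def psd_scaled)
    show "M 1 + M 2 + M 3 = mat 1"
      unfolding vec_eq_iff all2
      using wk[of 1] wk[of 2] wk[of 3] abc(4)
      by (simp add: M_def lam_def bloch_entries complex_eq_iff mat_def field_simps)
  qed
  have sp: "success_prob M (\<lambda>x. bloch_state (v x)) = 1/3 + 1/3 * f"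
  proof -
    have t: "Re (trace (M x ** bloch_state (v x))) = lam x * (1 + f)" if "x \<in> {1,2,3}" for x
      using wv[OF that] by (simp add: M_def tr_scaled)
    have af: "a * f + b * f + c * f = f"
      using abc(4) by (metis distrib_right mult_1_left)
    show ?thesis unfolding success_prob_def using t abc(4) af
      by (simp add: lam_def field_simps)
  qed
  have le: "success_prob N (\<lambda>x. bloch_state (v x)) \<le> 1/3 + 1/3 * f" if "povm3 N" for N
  proof -
    have ps: "psd (N x)" if "x \<in> {1,2,3}" for x using \<open>povm3 N\<close> that unfolding povm3_def by blast
    have sumN: "N 1 + N 2 + N 3 = mat 1" using \<open>povm3 N\<close> by (simp add: povm3_def)
    have s0: "Re (N 1 $ 0 $ 0) + Re (N 2 $ 0 $ 0) + Re (N 3 $ 0 $ 0) = 1"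
      using arg_cong[OF sumN, of "\<lambda>m. Re (m $ 0 $ 0)"] by (simp add: mat_def)
    have s1: "Re (N 1 $ 1 $ 1) + Re (N 2 $ 1 $ 1) + Re (N 3 $ 1 $ 1) = 1"
      using arg_cong[OF sumN, of "\<lambda>m. Re (m $ 1 $ 1)"] by (simp add: mat_def)
    have u: "Re (trace (N x ** bloch_state (v x))) \<le> (1+f) * (Re (N x $ 0 $ 0) + Re (N x $ 1 $ 1)) / 2"
      if "x \<in> {1,2,3}" for x
    proof -
      have "norm (v x) = f" using purity that by blast
      then show ?thesis using ub[OF ps[OF that], of "v x" f] by simp
    qed
    have "success_prob N (\<lambda>x. bloch_state (v x)) \<le>
       (1/3) * ((1+f) * (Re (N 1 $ 0 $ 0) + Re (N 1 $ 1 $ 1)) / 2) +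
       (1/3) * ((1+f) * (Re (N 2 $ 0 $ 0) + Re (N 2 $ 1 $ 1)) / 2) +
       (1/3) * ((1+f) * (Re (N 3 $ 0 $ 0) + Re (N 3 $ 1 $ 1)) / 2)"
      unfolding success_prob_def using u[of 1] u[of 2] u[of 3] by simp
    also have "\<dots> = (1+f)/6 * ((Re (N 1 $ 0 $ 0) + Re (N 2 $ 0 $ 0) + Re (N 3 $ 0 $ 0))
        + (Re (N 1 $ 1 $ 1) + Re (N 2 $ 1 $ 1) + Re (N 3 $ 1 $ 1)))"
      by (simp add: field_simps)
    also have "\<dots> = 1/3 + 1/3 * f" unfolding s0 s1 by (simp add: field_simps)
    finally show ?thesis .
  qed
  show ?thesis unfolding P_guess_def
  proof (rule cSup_eq_maximum)
    show "1/3 + 1/3 * f \<in> {success_prob M (\<lambda>x. bloch_state (v x)) |M. povm3 M}"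
      using sp povm by (metis (mono_tags, lifting) mem_Collect_eq)
  qed (use le in auto)
qed

end
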